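(* Let $r\geq 0$ and $k$ be integers, and let $n,m$ be integers with $n-1\geq m\geq 1$. Then \begin{align*} \sum_{l=0}^{n-m}\binom{n}{l}S_{1}(n-l,m)\tilde{A}_{l}^{(r,k)} &=r\sum_{l=0}^{n-m-1}\sum_{a=0}^{n-l-m-1}\frac{(-1)^{a+1}a!}{a+2}\binom{n-1}{l+m}\binom{n-l-m-1}{a}S_{1}(l+m,m)\tilde{A}_{n-l-m-a-1}^{(r+1,k)}\\ &\quad +\sum_{l=0}^{n-m-1}\frac{1}{n-l-m}\binom{n-1}{l+m}S_{1}(l+m,m)\left(\tilde{A}_{n-l-m}^{(r+1,k-1)}-\tilde{A}_{n-l-m}^{(r+1,k)}\right)\\ &\quad +\sum_{l=0}^{n-m}\binom{n-1}{l+m-1}S_{1}(l+m-1,m-1)\tilde{A}_{n-l-m}^{(r,k)}(-1). \end{align*}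
   Context: For $k\in\mathbf{Z}$, $Lif_{k}(x)=\sum_{m=0}^{\infty}\frac{x^{m}}{m!(m+1)^{k}}$. For integers $r\geq 0$, $k\in\mathbf{Z}$, the polynomials $\tilde{A}_{n}^{(r,k)}(x)$ are defined by \[\left(\frac{t}{(1+t)\log(1+t)}\right)^{r}Lif_{k}\left(-\log(1+t)\right)(1+t)^{x}=\sum_{n=0}^{\infty}\tilde{A}_{n}^{(r,k)}(x)\frac{t^{n}}{n!},\] and $\tilde{A}_{n}^{(r,k)}=\tilde{A}_{n}^{(r,k)}(0)$. $S_{1}(n,m)$ denotes the signed Stirling numbers of the first kind, defined by $x(x-1)\cdots(x-n+1)=\sum_{m=0}^{n}S_{1}(n,m)x^{m}$. *)

theory Defs
  imports "HOL-Computational_Algebra.Formal_Power_Series" "HOL-Combinatorics.Stirling"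
begin

(* Signed Stirling numbers of the first kind: x(x-1)...(x-n+1) = sum_m S1 n m x^m *)
definition S1 :: "nat \<Rightarrow> nat \<Rightarrow> real" where
  "S1 n m = (-1) ^ (n - m) * real (stirling n m)"

definition Lif :: "int \<Rightarrow> real fps" where
  "Lif k = Abs_fps (\<lambda>m. 1 / (fact m * (real (m + 1)) powi k))"

(* generating function (t/((1+t)log(1+t)))^r Lif_k(-log(1+t)) (1+t)^x *)
definition Agen :: "nat \<Rightarrow> int \<Rightarrow> real \<Rightarrow> real fps" where
  "Agen r k x = (fps_X / ((1 + fps_X) * fps_ln 1)) ^ r
      * (Lif k oo (- fps_ln 1)) * fps_binomial x"

definition Atil :: "nat \<Rightarrow> int \<Rightarrow> nat \<Rightarrow> real \<Rightarrow> real" where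
  "Atil r k n x = fact n * fps_nth (Agen r k x) n"

end

theory Submission imports Defs begin

definition L1 :: "real fps" where "L1 = Abs_fps (\<lambda>n. (-1)^n / real (n+1))"
definition H :: "real fps" where "H = (1 + fps_X) * L1"
definition P :: "real fps" where "P = inverse H"
definition Dser :: "real fps" where "Dser = Abs_fps (\<lambda>a. (-1)^(a+1) / (real a + 2))"
definition Cc :: "int \<Rightarrow> real fps" where "Cc k = Lif k oo (- fps_ln 1)"
definition SE :: "nat \<Rightarrow> real fps" where "SE m = Abs_fps (\<lambda>j. S1 j m / fact j)"

lemma aux1: "(x::real) \<ge> 0 \<Longrightarrow> (x+1) * (- s / (x+2) + s / (x+1)) = s / (x+2)"
proof -
  assume "x \<ge> 0" hence a: "x+1 \<noteq> 0" "x + 2 \<noteq> 0" by auto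
  have "(x+1) * (- s / (x+2) + s / (x+1)) = s - (x+1)*s/(x+2)" using a by (simp add: right_diff_distrib)
  also have "\<dots> = ((x+2)*s - (x+1)*s)/(x+2)" using a by (simp add: diff_divide_distrib)
  also have "(x+2)*s - (x+1)*s = s" by (simp add: algebra_simps)
  finally show ?thesis .
qed

lemma aux2: "(q::real) \<noteq> 0 \<Longrightarrow> F \<noteq> 0 \<Longrightarrow> (x::real) \<ge> 0 \<Longrightarrow> x / (F * q) = 1 / (F * (q / (x + 1))) - 1 / (F * q)"
proof -
  assume "x \<ge> 0" "q \<noteq> 0" "F \<noteq> 0" hence a: "x+1 \<noteq> 0" "q \<noteq> 0" "F \<noteq> 0" by auto
  thus ?thesis by (simp add: field_simps)
qed

lemma L_eq: "fps_ln (1::real) = fps_X * L1"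
  by (rule fps_ext) (auto simp: fps_ln_nth L1_def)

lemma H0: "fps_nth H 0 = 1"
  by (simp add: H_def L1_def fps_mult_nth)

lemma H_nz: "H \<noteq> 0" using H0 by auto

lemma PH: "P * H = 1" unfolding P_def by (rule inverse_mult_eq_1) (simp add: H0)

lemma X_nz: "(fps_X :: real fps) \<noteq> 0" by simp

lemma P_gen: "fps_X / ((1 + fps_X) * fps_ln (1::real)) = P"
proof -
  have e: "(1 + fps_X) * fps_ln (1::real) = fps_X * H" by (simp add: L_eq H_def algebra_simps)
  have "P * (fps_X * H) = fps_X" using PH by (simp add: algebra_simps)
  hence "fps_X / (fps_X * H) = (P * (fps_X * H)) / (fps_X * H)" by simp
  also have "\<dots> = P" by (rule fps_divide_times_eq) (simp add: H_nz)
  finally show ?thesis using e by simp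
qed

lemma Agen_eq: "Agen r k x = P ^ r * Cc k * fps_binomial x"
  by (simp add: Agen_def P_gen Cc_def)

lemma one_plus_X_mult_nth: "fps_nth ((1 + fps_X) * f) (Suc n) = fps_nth f (Suc n) + fps_nth (f :: real fps) n"
  by (simp add: distrib_right)

lemma H_deriv: "fps_deriv H = - Dser"
proof (rule fps_ext)
  fix a
  have "fps_nth H (Suc a) = fps_nth L1 (Suc a) + fps_nth L1 a" unfolding H_def by (rule one_plus_X_mult_nth)
  hence "fps_nth (fps_deriv H) a = (real a + 1) * (- ((-1)^a) / (real a + 2) + (-1)^a / (real a + 1))"
    by (simp add: L1_def add.commute)
  also have "\<dots> = (-1)^a / (real a + 2)" by (rule aux1) simp
  finally show "fps_nth (fps_deriv H) a = fps_nth (- Dser) a" by (simp add: Dser_def)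
qed

lemma P_deriv: "fps_deriv P = Dser * P^2"
  unfolding P_def by (simp add: fps_inverse_deriv H0 H_deriv)

lemma Lif_deriv: "fps_X * fps_deriv (Lif k) = Lif (k - 1) - Lif k"
proof (rule fps_ext)
  fix n
  show "fps_nth (fps_X * fps_deriv (Lif k)) n = fps_nth (Lif (k - 1) - Lif k) n"
  proof (cases n)
    case 0 then show ?thesis by (simp add: Lif_def power_int_diff)
  next
    case (Suc j)
    define F where "F = (fact (Suc j) :: real)"
    define x where "x = real (Suc j)"
    define q where "q = real (Suc j + 1) powi k"
    have F: "F \<noteq> 0" by (simp add: F_def)
    have x: "x \<ge> 0" by (simp add: x_def)
    have q: "q \<noteq> 0" by (simp add: q_def)
    have e: "real (Suc j + 1) powi (k - 1) = q / (x + 1)" by (simp add: q_def x_def power_int_diff)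
    have "fps_nth (fps_X * fps_deriv (Lif k)) n = x / (F * q)"
      using Suc by (simp add: Lif_def F_def x_def q_def)
    also have "\<dots> = 1 / (F * (q / (x + 1))) - 1 / (F * q)" by (rule aux2[OF q F x])
    also have "\<dots> = 1 / (F * real (Suc j + 1) powi (k - 1)) - 1 / (F * q)" by (simp only: e)
    also have "\<dots> = fps_nth (Lif (k - 1) - Lif k) n" using Suc by (simp add: Lif_def F_def q_def)
    finally show ?thesis .
  qed
qed


lemma Lneg0: "fps_nth (- fps_ln (1::real)) 0 = 0"
  by (simp add: fps_ln_nth)

lemma Cc_deriv: "fps_deriv (Cc k) = (fps_deriv (Lif k) oo - fps_ln 1) * (- inverse (1 + fps_X))"
  unfolding Cc_def by (simp add: fps_compose_deriv[OF Lneg0] fps_ln_deriv)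

lemma Cc_rel: "(- fps_ln 1) * (fps_deriv (Lif k) oo - fps_ln 1) = Cc (k - 1) - Cc k"
proof -
  have "(fps_X * fps_deriv (Lif k)) oo - fps_ln 1 = (fps_X oo - fps_ln (1::real)) * (fps_deriv (Lif k) oo - fps_ln 1)"
    by (rule fps_compose_mult_distrib[OF Lneg0])
  also have "fps_X oo - fps_ln (1::real) = - fps_ln 1" using Lneg0 by simp
  finally show ?thesis unfolding Lif_deriv Cc_def fps_compose_sub_distrib by simp
qed

lemma L1_0: "fps_nth L1 0 = 1" by (simp add: L1_def)

lemma PL1: "P * L1 = inverse (1 + fps_X)"
proof -
  have "P * L1 = inverse (1 + fps_X) * (inverse L1 * L1)"
    by (simp add: P_def H_def fps_inverse_mult mult.assoc)
  also have "inverse L1 * L1 = 1" by (rule inverse_mult_eq_1) (simp add: L1_0)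
  finally show ?thesis by simp
qed

lemma E_rel: "fps_X * (P ^ r * fps_deriv (Cc k)) = P ^ (r + 1) * (Cc (k - 1) - Cc k)"
proof -
  define Q where "Q = fps_deriv (Lif k) oo - fps_ln 1"
  have 1: "Cc (k - 1) - Cc k = - (fps_X * L1 * Q)" using Cc_rel[of k] by (simp add: L_eq Q_def)
  have 2: "P ^ (r + 1) * (Cc (k - 1) - Cc k) = - (fps_X * P ^ r * (P * L1) * Q)"
    by (simp add: 1 mult_ac)
  show ?thesis using 2 PL1 by (simp add: Cc_deriv Q_def mult_ac)
qed

lemma F_deriv: "fps_deriv (P ^ r * Cc k) = of_nat r * Dser * (P ^ (r + 1) * Cc k) + P ^ r * fps_deriv (Cc k)"
proof -
  have "fps_deriv (P ^ r) = of_nat r * Dser * P ^ (r + 1)"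
  proof (cases r)
    case 0 then show ?thesis by simp
  next
    case (Suc q)
    have "fps_deriv (P ^ r) = of_nat r * fps_deriv P * P ^ q" using Suc by (simp only: fps_deriv_power' diff_Suc_1)
    also have "\<dots> = of_nat r * Dser * (P ^ 2 * P ^ q)" by (simp add: P_deriv mult_ac)
    also have "P ^ 2 * P ^ q = P ^ (r + 1)" using Suc by (simp add: power_add[symmetric])
    finally show ?thesis .
  qed
  thus ?thesis by (simp add: algebra_simps)
qed

lemma S1_rec: "S1 (Suc j) (Suc m) = S1 j m - real j * S1 j (Suc m)"
proof (cases "j < m")
  case True then show ?thesis by (simp add: S1_def)
next
  case False
  show ?thesis
  proof (cases "j = m")
    case True then show ?thesis by (simp add: S1_def)
  next
    case False2: False
    with False have jm: "m < j" by simp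
    then obtain d where d: "j = Suc (m + d)" by (metis less_iff_Suc_add)
    show ?thesis by (simp add: S1_def d algebra_simps)
  qed
qed

lemma SE_nth: "fps_nth (SE m) j = S1 j m / fact j" by (simp add: SE_def)

lemma SE_deriv_nth: "fps_nth (fps_deriv (SE m)) j = S1 (Suc j) m / fact j"
  by (simp add: SE_def del: of_nat_Suc)

lemma SE_deriv: "fps_deriv (SE (Suc m)) = inverse (1 + fps_X) * SE m"
proof -
  have "(1 + fps_X) * fps_deriv (SE (Suc m)) = SE m"
  proof (rule fps_ext)
    fix j
    show "fps_nth ((1 + fps_X) * fps_deriv (SE (Suc m))) j = fps_nth (SE m) j"
    proof (cases j)
      case 0 then show ?thesis by (simp add: SE_deriv_nth SE_nth S1_rec[of 0])
    next
      case (Suc i)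
      have "fps_nth ((1 + fps_X) * fps_deriv (SE (Suc m))) j = S1 (Suc (Suc i)) (Suc m) / fact (Suc i) + S1 (Suc i) (Suc m) / fact i"
        using Suc by (simp only: one_plus_X_mult_nth SE_deriv_nth)
      also have "S1 (Suc i) (Suc m) / fact i = real (Suc i) * S1 (Suc i) (Suc m) / fact (Suc i)"
        by simp
      also have "S1 (Suc (Suc i)) (Suc m) / fact (Suc i) + real (Suc i) * S1 (Suc i) (Suc m) / fact (Suc i)
          = (S1 (Suc (Suc i)) (Suc m) + real (Suc i) * S1 (Suc i) (Suc m)) / fact (Suc i)"
        by (simp only: add_divide_distrib)
      also have "\<dots> = S1 (Suc i) m / fact (Suc i)" by (simp only: S1_rec[of "Suc i"]) simp
      finally show ?thesis using Suc by (simp add: SE_nth)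
    qed
  qed
  hence "inverse (1 + fps_X) * ((1 + fps_X) * fps_deriv (SE (Suc m))) = inverse (1 + fps_X) * SE m" by simp
  moreover have "inverse (1 + fps_X) * (1 + fps_X) = (1 :: real fps)" by (rule inverse_mult_eq_1) simp
  ultimately show ?thesis by (simp add: mult.assoc[symmetric])
qed

lemma egf_mult: "fact N * fps_nth (f * g) N =
   (\<Sum>i=0..N. real (N choose i) * (fact i * fps_nth f i) * (fact (N - i) * fps_nth (g :: real fps) (N - i)))"
  unfolding fps_mult_nth sum_distrib_left
proof (rule sum.cong[OF refl])
  fix i assume "i \<in> {0..N}"
  hence "real (N choose i) * fact i * fact (N - i) = fact N" by (simp add: binomial_fact)
  thus "fact N * (fps_nth f i * fps_nth g (N - i)) = real (N choose i) * (fact i * fps_nth f i) * (fact (N - i) * fps_nth g (N - i))"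
    by (metis (no_types, lifting) mult.assoc mult.left_commute)
qed

lemma reidx: fixes g :: "nat \<Rightarrow> real" assumes "c \<le> N" "\<And>i. i < c \<Longrightarrow> g i = 0"
  shows "(\<Sum>l=0..N-c. g (l+c)) = (\<Sum>i=0..N. g i)"
proof -
  have "(\<Sum>l=0..N-c. g (l+c)) = (\<Sum>i=0+c..N-c+c. g i)" by (rule sum.shift_bounds_cl_nat_ivl[symmetric])
  also have "\<dots> = (\<Sum>i=c..N. g i)" using assms by simp
  also have "\<dots> = (\<Sum>i=0..N. g i)" by (rule sum.mono_neutral_left) (use assms in auto)
  finally show ?thesis .
qed


lemma SE_fact: "fact j * fps_nth (SE m) j = S1 j m" by (simp add: SE_nth)

lemma Atil_fact: "fact j * fps_nth (Agen r k x) j = Atil r k j x" by (simp add: Atil_def)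

lemma E_fact: "fact j * fps_nth (P ^ r * fps_deriv (Cc k)) j =
   (Atil (r+1) (k-1) (Suc j) 0 - Atil (r+1) k (Suc j) 0) / real (Suc j)"
proof -
  have "fps_nth (P ^ r * fps_deriv (Cc k)) j = fps_nth (fps_X * (P ^ r * fps_deriv (Cc k))) (Suc j)" by simp
  also have "\<dots> = fps_nth (Agen (r+1) (k-1) 0 - Agen (r+1) k 0) (Suc j)"
    by (simp add: E_rel Agen_eq right_diff_distrib)
  finally have e: "fps_nth (P ^ r * fps_deriv (Cc k)) j = (Atil (r+1) (k-1) (Suc j) 0 - Atil (r+1) k (Suc j) 0) / fact (Suc j)"
    by (simp add: Atil_def right_diff_distrib[symmetric])
  have f: "fact j * (x / fact (Suc j)) = x / real (Suc j)" for x :: real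
    by (simp only: fact_Suc) (simp del: of_nat_Suc)
  show ?thesis unfolding e f ..
qed

lemma DA_fact: "fact M * fps_nth (Dser * Agen (r+1) k 0) M =
  (\<Sum>a=0..M. real (M choose a) * ((-1)^(a+1) * fact a / (real a + 2)) * Atil (r+1) k (M-a) 0)"
  unfolding egf_mult by (rule sum.cong) (simp_all add: Atil_fact Dser_def)

theorem theorem6:
  fixes r :: nat and k :: int and n m :: nat
  assumes "1 \<le> m" and "m \<le> n - 1" and "n \<ge> 2"
  shows "(\<Sum>l=0..n-m. real (n choose l) * S1 (n - l) m * Atil r k l 0) =
      real r * (\<Sum>l=0..n-m-1. \<Sum>a=0..n-l-m-1.
          (-1) ^ (a + 1) * fact a / (real a + 2) * real ((n - 1) choose (l + m))
          * real ((n - l - m - 1) choose a) * S1 (l + m) m * Atil (r + 1) k (n - l - m - a - 1) 0)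
    + (\<Sum>l=0..n-m-1. 1 / real (n - l - m) * real ((n - 1) choose (l + m)) * S1 (l + m) m
          * (Atil (r + 1) (k - 1) (n - l - m) 0 - Atil (r + 1) k (n - l - m) 0))
    + (\<Sum>l=0..n-m. real ((n - 1) choose (l + m - 1)) * S1 (l + m - 1) (m - 1)
          * Atil r k (n - l - m) (-1))"
proof -
  obtain N where nN: "n = Suc N" using assms by (cases n) auto
  obtain m' where mm: "m = Suc m'" using assms by (cases m) auto
  have mN: "m \<le> N" using assms nN by simp
  define E where "E = P ^ r * fps_deriv (Cc k)"
  define G where "G = Agen r k 0 * SE m"
  have Am1: "Agen r k (-1) = inverse (1 + fps_X) * Agen r k 0"
    by (simp add: Agen_eq fps_binomial_minus_one mult_ac)
  have A1: "Agen (r+1) k 0 = P ^ (r+1) * Cc k" by (simp add: Agen_eq)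
  have dG: "fps_deriv G = SE m' * Agen r k (-1) + fps_const (real r) * (SE m * (Dser * Agen (r+1) k 0)) + SE m * E"
  proof -
    have a0: "Agen r k 0 = P ^ r * Cc k" by (simp add: Agen_eq)
    have dA: "fps_deriv (Agen r k 0) = fps_const (real r) * Dser * Agen (r+1) k 0 + E"
      unfolding a0 A1 E_def F_deriv fps_of_nat by simp
    show ?thesis
      unfolding G_def fps_deriv_mult dA Am1 mm SE_deriv by (simp add: algebra_simps)
  qed
  define g1 where "g1 i = real (N choose i) * S1 i m * (\<Sum>a=0..N-i. real ((N-i) choose a) * ((-1)^(a+1) * fact a / (real a + 2)) * Atil (r+1) k (N-i-a) 0)" for i
  define g2 where "g2 i = real (N choose i) * S1 i m * ((Atil (r+1) (k-1) (Suc (N-i)) 0 - Atil (r+1) k (Suc (N-i)) 0) / real (Suc (N-i)))" for i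
  define g3 where "g3 i = real (N choose i) * S1 i m' * Atil r k (N-i) (-1)" for i
  have T1: "fact N * fps_nth (SE m * (Dser * Agen (r+1) k 0)) N = (\<Sum>i=0..N. g1 i)"
    unfolding egf_mult[of N "SE m"] DA_fact by (rule sum.cong) (simp_all add: g1_def SE_fact)
  have T2: "fact N * fps_nth (SE m * E) N = (\<Sum>i=0..N. g2 i)"
    unfolding egf_mult by (rule sum.cong) (simp_all add: g2_def SE_fact E_def E_fact del: of_nat_Suc)
  have T3: "fact N * fps_nth (SE m' * Agen r k (-1)) N = (\<Sum>i=0..N. g3 i)"
    unfolding egf_mult by (rule sum.cong) (simp_all add: g3_def SE_fact Atil_fact)
  have LHS: "(\<Sum>l=0..n-m. real (n choose l) * S1 (n - l) m * Atil r k l 0) = fact n * fps_nth G n"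
  proof -
    have "fact n * fps_nth G n = (\<Sum>l=0..n. real (n choose l) * S1 (n - l) m * Atil r k l 0)"
      unfolding G_def egf_mult by (rule sum.cong) (simp_all add: SE_fact Atil_fact)
    also have "\<dots> = (\<Sum>l=0..n-m. real (n choose l) * S1 (n - l) m * Atil r k l 0)"
      by (rule sum.mono_neutral_right) (auto simp: S1_def)
    finally show ?thesis by simp
  qed
  have step: "fact n * fps_nth G n = fact N * fps_nth (fps_deriv G) N"
    by (simp add: nN del: of_nat_Suc)
  have dN: "fact N * fps_nth (fps_deriv G) N = (\<Sum>i=0..N. g3 i) + real r * (\<Sum>i=0..N. g1 i) + (\<Sum>i=0..N. g2 i)"
    unfolding dG T1[symmetric] T2[symmetric] T3[symmetric] by (simp only: fps_add_nth fps_mult_left_const_nth) (simp add: algebra_simps)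
  have R1: "(\<Sum>l=0..n-m-1. \<Sum>a=0..n-l-m-1.
          (-1) ^ (a + 1) * fact a / (real a + 2) * real ((n - 1) choose (l + m))
          * real ((n - l - m - 1) choose a) * S1 (l + m) m * Atil (r + 1) k (n - l - m - a - 1) 0)
        = (\<Sum>l=0..N-m. g1 (l + m))"
  proof (rule sum.cong)
    show "{0..n-m-1} = {0..N-m}" using nN by simp
  next
    fix l assume l: "l \<in> {0..N-m}"
    have e1: "n - l - m - 1 = N - (l + m)" using nN by simp
    have e2: "\<And>a. n - l - m - a - 1 = N - (l + m) - a" using nN by simp
    show "(\<Sum>a=0..n-l-m-1.
          (-1) ^ (a + 1) * fact a / (real a + 2) * real ((n - 1) choose (l + m))
          * real ((n - l - m - 1) choose a) * S1 (l + m) m * Atil (r + 1) k (n - l - m - a - 1) 0) = g1 (l + m)"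
      unfolding e1 e2 g1_def sum_distrib_left using nN by (intro sum.cong) (simp_all add: mult_ac)
  qed
  have R2: "(\<Sum>l=0..n-m-1. 1 / real (n - l - m) * real ((n - 1) choose (l + m)) * S1 (l + m) m
          * (Atil (r + 1) (k - 1) (n - l - m) 0 - Atil (r + 1) k (n - l - m) 0)) = (\<Sum>l=0..N-m. g2 (l + m))"
  proof (rule sum.cong)
    show "{0..n-m-1} = {0..N-m}" using nN by simp
  next
    fix l assume l: "l \<in> {0..N-m}"
    have e1: "n - l - m = Suc (N - (l + m))" using nN l mN by auto
    show "1 / real (n - l - m) * real ((n - 1) choose (l + m)) * S1 (l + m) m
          * (Atil (r + 1) (k - 1) (n - l - m) 0 - Atil (r + 1) k (n - l - m) 0) = g2 (l + m)"
      unfolding e1 g2_def using nN by (simp add: divide_inverse mult_ac del: of_nat_Suc)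
  qed
  have R3: "(\<Sum>l=0..n-m. real ((n - 1) choose (l + m - 1)) * S1 (l + m - 1) (m - 1)
          * Atil r k (n - l - m) (-1)) = (\<Sum>l=0..N-m'. g3 (l + m'))"
  proof (rule sum.cong)
    show "{0..n-m} = {0..N-m'}" using nN mm by simp
  next
    fix l assume l: "l \<in> {0..N-m'}"
    have e1: "n - l - m = N - (l + m')" using nN mm by simp
    show "real ((n - 1) choose (l + m - 1)) * S1 (l + m - 1) (m - 1)
          * Atil r k (n - l - m) (-1) = g3 (l + m')"
      unfolding e1 g3_def using nN mm by simp
  qed
  have Z1: "(\<Sum>l=0..N-m. g1 (l + m)) = (\<Sum>i=0..N. g1 i)"
    by (rule reidx[OF mN]) (simp add: g1_def S1_def)
  have Z2: "(\<Sum>l=0..N-m. g2 (l + m)) = (\<Sum>i=0..N. g2 i)"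
    by (rule reidx[OF mN]) (simp add: g2_def S1_def)
  have Z3: "(\<Sum>l=0..N-m'. g3 (l + m')) = (\<Sum>i=0..N. g3 i)"
    by (rule reidx) (use mN mm in \<open>simp_all add: g3_def S1_def\<close>)
  show ?thesis
    unfolding LHS step dN R1 R2 R3 Z1 Z2 Z3 by (simp add: algebra_simps)
qed

end
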